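(* Let $n,m\ge1$, $q_1,\dots,q_m\in\Delta_n$, $d\in\mathbb{R}^{n^2}_+$, and let $\mathcal Z=\mathcal X\times\mathcal Y$, $G$, $\hat A$, $\mathcal E$ be as in the context. Define the regularizer on $\mathcal Z$ \[r(\mathbf x,\mathbf y)=\frac{2\|d\|_\infty}{m}\Big(10\sum_{i=1}^m\langle x_i,\log x_i\rangle+5m\langle p,\log p\rangle+\hat x^\top\hat A^\top(\mathbf y)^2-p^\top\mathcal E^\top(\mathbf y)^2\Big),\] where $\hat x=(x_1^\top,\dots,x_m^\top)^\top$ and $\log$, $(\cdot)^2$ act entrywise. Then $r$ is $3$-area-convex with respect to $G$, i.e. for all $\boldsymbol a,\boldsymbol b,\boldsymbol c\in\mathcal Z$, \[3\Big(r(\boldsymbol a)+r(\boldsymbol b)+r(\boldsymbol c)-3r\big(\tfrac{\boldsymbol a+\boldsymbol b+\boldsymbol c}{3}\big)\Big)\ge\langle G(\boldsymbol a)-G(\boldsymbol b),\boldsymbol b-\boldsymbol c\rangle.\]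
   Context: $\Delta_k=\{p\in\mathbb{R}^k_+:\sum_j p_j=1\}$. $\mathcal X=(\Delta_{n^2})^m\times\Delta_n$ with elements $\mathbf x=(x_1,\dots,x_m,p)$, $\mathcal Y=[-1,1]^{2mn}$ with elements $\mathbf y=(y_1,\dots,y_m)$, $y_i\in[-1,1]^{2n}$. $A\in\{0,1\}^{2n\times n^2}$ is the incidence matrix with $Ax=(X\mathbf 1;X^\top\mathbf 1)$ for $x$ the vectorization of $X\in\mathbb{R}^{n\times n}$. $\hat A$ is block diagonal with $m$ diagonal blocks $A$; $\mathcal E\in\mathbb{R}^{2mn\times n}$ consists of $m$ vertically stacked blocks each equal to $-\begin{pmatrix}I_n\\0_{n\times n}\end{pmatrix}$; $\boldsymbol A=(\hat A\ \ \mathcal E)$. $\boldsymbol d=(d,\dots,d,0_n)$, $\boldsymbol c=(0_n,q_1,\dots,0_n,q_m)$. $G(\mathbf x,\mathbf y)=\frac1m\big(\boldsymbol d+2\|d\|_\infty\boldsymbol A^\top\mathbf y,\ 2\|d\|_\infty(\boldsymbol c-\boldsymbol A\mathbf x)\big)$, the gradient operator $(\nabla_{\mathbf x}F,-\nabla_{\mathbf y}F)$ of $F(\mathbf x,\mathbf y)=\frac1m\{\boldsymbol d^\top\mathbf x+2\|d\|_\infty(\mathbf y^\top\boldsymbol A\mathbf x-\boldsymbol c^\top\mathbf y)\}$. Convention $0\log0=0$. *)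

theory Defs
  imports Complex_Main
begin

(* Index sets: blocks i < m, coordinates of x_i (vectorized n x n matrix X_i) e < n^2
   with e = j*n + k  <->  entry (j,k) (row-major vectorization), coordinates of p: j < n,
   coordinates of y_i: r < 2n (first n rows: row sums, last n: column sums).
   A point z of Z = X x Y is a triple (x, p, y) with
     x :: nat => nat => real   (x i e),
     p :: nat => real          (p j),
     y :: nat => nat => real   (y i r).
   Values outside the index ranges are irrelevant (never used). *)

type_synonym pt = "(nat \<Rightarrow> nat \<Rightarrow> real) \<times> (nat \<Rightarrow> real) \<times> (nat \<Rightarrow> nat \<Rightarrow> real)"

definition simplex :: "nat \<Rightarrow> (nat \<Rightarrow> real) \<Rightarrow> bool" where
  "simplex k v \<longleftrightarrow> (\<forall>i<k. 0 \<le> v i) \<and> (\<Sum>i<k. v i) = 1"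

definition xlogx :: "real \<Rightarrow> real" where
  "xlogx t = (if t = 0 then 0 else t * ln t)"

(* incidence matrix A in {0,1}^{2n x n^2}: (A x) = (X 1; X^T 1) *)
definition incA :: "nat \<Rightarrow> nat \<Rightarrow> nat \<Rightarrow> real" where
  "incA n r e = (if (r < n \<and> e div n = r) \<or> (n \<le> r \<and> r < 2*n \<and> e mod n = r - n) then 1 else 0)"

definition Eblk :: "nat \<Rightarrow> nat \<Rightarrow> nat \<Rightarrow> real" where
  "Eblk n r j = (if r < n \<and> r = j then -1 else 0)"

definition inZ :: "nat \<Rightarrow> nat \<Rightarrow> pt \<Rightarrow> bool" where
  "inZ n m z = (case z of (x, p, y) \<Rightarrow>
     (\<forall>i<m. simplex (n^2) (x i)) \<and> simplex n p \<and>
     (\<forall>i<m. \<forall>r<2*n. -1 \<le> y i r \<and> y i r \<le> 1))"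

definition dinf :: "nat \<Rightarrow> (nat \<Rightarrow> real) \<Rightarrow> real" where
  "dinf n d = Max ((\<lambda>e. \<bar>d e\<bar>) ` {..<n^2})"

definition Ax :: "nat \<Rightarrow> nat \<Rightarrow> pt \<Rightarrow> nat \<Rightarrow> nat \<Rightarrow> real" where
  "Ax n m z i r = (case z of (x, p, y) \<Rightarrow>
     (\<Sum>e<n^2. incA n r e * x i e) + (\<Sum>j<n. Eblk n r j * p j))"

definition ATy_x :: "nat \<Rightarrow> (nat \<Rightarrow> nat \<Rightarrow> real) \<Rightarrow> nat \<Rightarrow> nat \<Rightarrow> real" where
  "ATy_x n y i e = (\<Sum>r<2*n. incA n r e * y i r)"

definition ATy_p :: "nat \<Rightarrow> nat \<Rightarrow> (nat \<Rightarrow> nat \<Rightarrow> real) \<Rightarrow> nat \<Rightarrow> real" where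
  "ATy_p n m y j = (\<Sum>i<m. \<Sum>r<2*n. Eblk n r j * y i r)"

definition cvec :: "nat \<Rightarrow> (nat \<Rightarrow> nat \<Rightarrow> real) \<Rightarrow> nat \<Rightarrow> nat \<Rightarrow> real" where
  "cvec n q i r = (if r < n then 0 else q i (r - n))"

definition Gop :: "nat \<Rightarrow> nat \<Rightarrow> (nat \<Rightarrow> real) \<Rightarrow> (nat \<Rightarrow> nat \<Rightarrow> real) \<Rightarrow> pt \<Rightarrow> pt" where
  "Gop n m d q z = (case z of (x, p, y) \<Rightarrow>
     ((\<lambda>i e. (d e + 2 * dinf n d * ATy_x n y i e) / real m),
      (\<lambda>j. (0 + 2 * dinf n d * ATy_p n m y j) / real m),
      (\<lambda>i r. (2 * dinf n d * (cvec n q i r - Ax n m z i r)) / real m)))"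

definition ip :: "nat \<Rightarrow> nat \<Rightarrow> pt \<Rightarrow> pt \<Rightarrow> real" where
  "ip n m u v = (case u of (ux, up, uy) \<Rightarrow> case v of (vx, vp, vy) \<Rightarrow>
     (\<Sum>i<m. \<Sum>e<n^2. ux i e * vx i e) + (\<Sum>j<n. up j * vp j) +
     (\<Sum>i<m. \<Sum>r<2*n. uy i r * vy i r))"

definition pt_diff :: "pt \<Rightarrow> pt \<Rightarrow> pt" where
  "pt_diff u v = (case u of (ux, up, uy) \<Rightarrow> case v of (vx, vp, vy) \<Rightarrow>
     ((\<lambda>i e. ux i e - vx i e), (\<lambda>j. up j - vp j), (\<lambda>i r. uy i r - vy i r)))"

definition pt_avg3 :: "pt \<Rightarrow> pt \<Rightarrow> pt \<Rightarrow> pt" where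
  "pt_avg3 a b c = (case a of (ax, ap, ay) \<Rightarrow> case b of (bx, bp, by) \<Rightarrow> case c of (cx, cp, cy) \<Rightarrow>
     ((\<lambda>i e. (ax i e + bx i e + cx i e) / 3), (\<lambda>j. (ap j + bp j + cp j) / 3),
      (\<lambda>i r. (ay i r + by i r + cy i r) / 3)))"

definition reg :: "nat \<Rightarrow> nat \<Rightarrow> (nat \<Rightarrow> real) \<Rightarrow> pt \<Rightarrow> real" where
  "reg n m d z = (case z of (x, p, y) \<Rightarrow>
     2 * dinf n d / real m *
       (10 * (\<Sum>i<m. \<Sum>e<n^2. xlogx (x i e))
        + 5 * real m * (\<Sum>j<n. xlogx (p j))
        + (\<Sum>i<m. \<Sum>e<n^2. x i e * (\<Sum>r<2*n. incA n r e * (y i r)^2))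
        - (\<Sum>j<n. p j * (\<Sum>i<m. \<Sum>r<2*n. Eblk n r j * (y i r)^2))))"

end

theory Submission
  imports Defs
begin

lemma ln_lb1:
  fixes t :: real assumes "1 \<le> t" shows "2*(t-1)/(t+1) \<le> ln t"
proof -
  let ?f = "\<lambda>x::real. ln x - 2*(x-1)/(x+1)"
  have "?f 1 \<le> ?f t"
  proof (rule DERIV_nonneg_imp_increasing_open[OF assms])
    fix x :: real assume x: "1 < x" "x < t"
    have "DERIV ?f x :> (1/x - (2*(x+1) - 2*(x-1)*1)/((x+1)^2))"
      using x by (auto intro!: derivative_eq_intros simp: power2_eq_square)
    moreover have "1/x - (2*(x+1) - 2*(x-1)*1)/((x+1)^2) = (x-1)^2/(x*(x+1)^2)"
    proof -
      have "x > 0" "x + 1 > 0" using x by auto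
      then show ?thesis by (simp add: divide_simps power2_eq_square) (simp add: algebra_simps)
    qed
    moreover have "(x-1)^2/(x*(x+1)^2) \<ge> 0" using x by simp
    ultimately show "\<exists>y. DERIV ?f x :> y \<and> y \<ge> 0" by auto
  next
    show "continuous_on {1..t} ?f"
      by (intro continuous_intros) auto
  qed
  then show ?thesis by simp
qed

lemma ln_ub2:
  fixes s :: real assumes "1 \<le> s" shows "ln s \<le> (s - 1/s)/2"
proof -
  let ?f = "\<lambda>x::real. (x - 1/x)/2 - ln x"
  have "?f 1 \<le> ?f s"
  proof (rule DERIV_nonneg_imp_increasing_open[OF assms])
    fix x :: real assume x: "1 < x" "x < s"
    have "DERIV ?f x :> ((1 + 1/x^2)/2 - 1/x)"
      using x by (auto intro!: derivative_eq_intros simp: power2_eq_square field_simps)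
    moreover have "(1 + 1/x^2)/2 - 1/x = (x-1)^2/(2*x^2)"
      using x by (simp add: field_simps power2_eq_square)
    moreover have "(x-1)^2/(2*x^2) \<ge> 0" using x by simp
    ultimately show "\<exists>y. DERIV ?f x :> y \<and> y \<ge> 0" by auto
  next
    show "continuous_on {1..s} ?f"
      by (intro continuous_intros) auto
  qed
  then show ?thesis by simp
qed

definition bent :: "real \<Rightarrow> real \<Rightarrow> real" where
  "bent m w = xlogx w - xlogx m - (1 + ln m) * (w - m)"

lemma bent_low:
  fixes m w :: real assumes m: "0 < m" and w: "0 \<le> w" "w \<le> m"
  shows "(w - m)^2 \<le> 2 * m * bent m w"
proof (cases "w = 0")
  case True
  then show ?thesis using m by (simp add: bent_def xlogx_def power2_eq_square algebra_simps)
next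
  case False
  then have wp: "0 < w" using w by auto
  have s1: "1 \<le> m / w" using wp w by simp
  have "ln (m/w) \<le> (m/w - 1/(m/w))/2" by (rule ln_ub2[OF s1])
  then have h: "ln m - ln w \<le> (m/w - w/m)/2" using wp m by (simp add: ln_div)
  have "bent m w = w * (ln w - ln m) - w + m"
    using wp m by (simp add: bent_def xlogx_def algebra_simps)
  also have "\<dots> \<ge> w * (-(m/w - w/m)/2) - w + m"
    using h wp by (simp add: mult_left_mono)
  finally have "bent m w \<ge> w * (-(m/w - w/m)/2) - w + m" .
  moreover have "w * (-(m/w - w/m)/2) - w + m = (w - m)^2 / (2*m)"
    using wp m by (simp add: field_simps power2_eq_square)
  ultimately have "(w - m)^2 / (2*m) \<le> bent m w" by simp
  then show ?thesis using m by (simp add: divide_simps mult.commute)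
qed

lemma bent_high:
  fixes m w :: real assumes m: "0 < m" and w: "m \<le> w"
  shows "(w - m)^2 \<le> (w + m) * bent m w"
proof -
  have wp: "0 < w" using w m by auto
  have s1: "1 \<le> w / m" using w m by simp
  have "2*(w/m-1)/(w/m+1) \<le> ln (w/m)" by (rule ln_lb1[OF s1])
  moreover have "2*(w/m-1)/(w/m+1) = 2*(w-m)/(w+m)"
  proof -
    have e1: "w/m - 1 = (w-m)/m" "w/m + 1 = (w+m)/m" using m by (simp_all add: field_simps)
    show ?thesis unfolding e1 using m wp by (simp add: divide_simps)
  qed
  ultimately have h: "2*(w-m)/(w+m) \<le> ln w - ln m" using wp m by (simp add: ln_div)
  have "bent m w = w * (ln w - ln m) - (w - m)"
    using wp m by (simp add: bent_def xlogx_def algebra_simps)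
  also have "\<dots> \<ge> w * (2*(w-m)/(w+m)) - (w - m)"
    using mult_left_mono[OF h, of w] wp by simp
  finally have "bent m w \<ge> w * (2*(w-m)/(w+m)) - (w - m)" .
  moreover have "w * (2*(w-m)/(w+m)) - (w - m) = (w - m)^2 / (w+m)"
    using wp m by (simp add: field_simps power2_eq_square)
  ultimately have "(w - m)^2 / (w+m) \<le> bent m w" by simp
  then show ?thesis using m wp by (simp add: divide_simps mult.commute)
qed

lemma quad_nonneg:
  fixes P Q R X Y :: real
  assumes "0 < P" "R^2 \<le> P * Q"
  shows "0 \<le> P*X^2 - 2*R*X*Y + Q*Y^2"
proof -
  have "P * (P*X^2 - 2*R*X*Y + Q*Y^2) = (P*X - R*Y)^2 + (P*Q - R^2)*Y^2"
    by (simp add: power2_eq_square algebra_simps)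
  also have "\<dots> \<ge> 0" using assms by simp
  finally show ?thesis using assms(1) by (simp add: zero_le_mult_iff)
qed

lemma pt_bound:
  fixes m w y yb e :: real
  assumes m: "0 < m" and w: "0 \<le> w" "w \<le> 3*m" and y: "\<bar>y\<bar> \<le> 1" "\<bar>yb\<bar> \<le> 1"
    and e: "0 \<le> e"
    and el: "w \<le> m \<Longrightarrow> (w-m)^2 \<le> 2*m*e" and eh: "m \<le> w \<Longrightarrow> (w-m)^2 \<le> (w+m)*e"
  shows "(w-m)^2 + m^2*(y-yb)^2 \<le> 3*m*(5*e + w*(y-yb)^2 + 2*yb*(w-m)*(y-yb))"
proof -
  define u where "u = y - yb"
  define G where "G = 15*m*e + 3*m*w*u^2 + 6*m*yb*(w-m)*u - (w-m)^2 - m^2*u^2"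
  have u2: "\<bar>u\<bar> \<le> 2" using y unfolding u_def by linarith
  have uu: "u^2 \<le> 4"
  proof -
    have "u^2 = \<bar>u\<bar>^2" by simp
    also have "\<dots> \<le> 2^2" by (rule power_mono[OF u2]) simp
    finally show ?thesis by simp
  qed
  have goal: "0 \<le> G"
  proof (cases "m \<le> w")
    case True
    define v where "v = w - m"
    have v0: "0 \<le> v" using True v_def by simp
    have h1: "15*m*v^2 \<le> 15*m*((w+m)*e)"
      using mult_left_mono[OF eh[OF True], of "15*m"] m v_def by simp
    have h2: "-(v*\<bar>u\<bar>) \<le> v*(yb*u)"
    proof -
      have "\<bar>yb*u\<bar> \<le> \<bar>u\<bar>" using y(2) by (simp add: abs_mult mult_left_le_one_le)
      then have "-\<bar>u\<bar> \<le> yb*u" by linarith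
      then show ?thesis using mult_left_mono[OF _ v0] by (metis minus_mult_right)
    qed
    have h3: "-(6*m*(w+m)*(v*\<bar>u\<bar>)) \<le> 6*m*(w+m)*(v*(yb*u))"
      using mult_left_mono[OF h2, of "6*m*(w+m)"] m w by simp
    have key: "(w+m)*G = 15*m*((w+m)*e) + 6*m*(w+m)*(v*(yb*u)) + (w+m)*(3*m*w-m^2)*u^2 - (w+m)*v^2"
      unfolding G_def v_def by (simp add: algebra_simps power2_eq_square)
    have pq: "(3*m*(w+m))^2 \<le> (14*m - w) * (m*(w+m)*(3*w-m))"
    proof -
      define s where "s = w - m"
      have a1: "(14*m-w)*(3*w-m) - 9*m*(w+m) = 8*(m*m) + 28*(m*s) - 3*(s*s)"
        unfolding s_def by (simp add: algebra_simps)
      have a2: "s*s \<le> 2*(m*s)"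
        using mult_right_mono[of "w-m" "2*m" "w-m"] w True unfolding s_def by (simp add: algebra_simps)
      have a3: "0 \<le> m*s" using m True s_def by simp
      have a5: "0 \<le> m*m" by simp
      have a4: "9*m*(w+m) \<le> (14*m-w)*(3*w-m)" using a1 a2 a3 a5 by linarith
      have "(3*m*(w+m))^2 = (m*(w+m)) * (9*m*(w+m))" by (simp add: power2_eq_square algebra_simps)
      also have "\<dots> \<le> (m*(w+m)) * ((14*m-w)*(3*w-m))"
        by (rule mult_left_mono[OF a4]) (use m w in simp)
      finally show ?thesis by (simp add: algebra_simps)
    qed
    have q: "0 \<le> (14*m - w)*v^2 - 2*(3*m*(w+m))*v*\<bar>u\<bar> + (m*(w+m)*(3*w-m))*\<bar>u\<bar>^2"
      by (rule quad_nonneg[OF _ pq]) (use w m in simp)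
    have q2: "(14*m - w)*v^2 - 2*(3*m*(w+m))*v*\<bar>u\<bar> + (m*(w+m)*(3*w-m))*\<bar>u\<bar>^2
       = 15*m*v^2 - 6*m*(w+m)*(v*\<bar>u\<bar>) + (w+m)*(3*m*w-m^2)*u^2 - (w+m)*v^2"
      unfolding v_def by (simp add: algebra_simps power2_eq_square)
    have "0 \<le> (w+m)*G" using key q q2 h1 h3 by linarith
    then show ?thesis using m w by (simp add: zero_le_mult_iff)
  next
    case False
    then have wm: "w \<le> m" by simp
    define a where "a = m - w"
    have a0: "0 \<le> a" "a \<le> m" using wm w unfolding a_def by auto
    have h1: "15*a^2 \<le> 15*(2*m*e)" using el[OF wm] a_def by (simp add: power2_commute mult_ac)
    have key: "2*G = 15*(2*m*e) + (6*m*w - 2*m^2)*u^2 - 12*m*a*(yb*u) - 2*a^2"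
      unfolding G_def a_def by (simp add: algebra_simps power2_eq_square)
    have rest: "0 \<le> 13*a^2 + (4*m^2 - 6*m*a)*u^2 - 12*m*a*(yb*u)"
    proof (cases "yb*u \<le> 0")
      case True
      have t1: "0 \<le> - (12*m*a*(yb*u))"
        using mult_nonneg_nonpos[of "12*m*a" "yb*u"] True m a0 by simp
      have t2: "0 \<le> 13*a^2 + (4*m^2 - 6*m*a)*u^2"
      proof (cases "0 \<le> 4*m^2 - 6*m*a")
        case True then show ?thesis by simp
      next
        case False
        have "4*(4*m^2 - 6*m*a) \<le> (4*m^2 - 6*m*a)*u^2"
          using mult_left_mono_neg[OF uu, of "4*m^2 - 6*m*a"] False by (simp add: mult.commute)
        moreover have "0 \<le> 13*a^2 + 4*(4*m^2 - 6*m*a)"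
        proof -
          have "13*a^2 + 4*(4*m^2 - 6*m*a) = (3*a-4*m)^2 + 4*a^2" by (simp add: algebra_simps power2_eq_square)
          moreover have "0 \<le> (3*a-4*m)^2 + 4*a^2" by simp
          ultimately show ?thesis by linarith
        qed
        ultimately show ?thesis by linarith
      qed
      show ?thesis using t1 t2 by linarith
    next
      case False
      then have pos: "0 < yb*u" by simp
      have "\<bar>yb\<bar> + \<bar>u\<bar> = \<bar>yb + u\<bar>"
        using pos by (cases "0 \<le> yb"; cases "0 \<le> u") (auto simp: zero_less_mult_iff)
      also have "yb + u = y" unfolding u_def by simp
      finally have s: "\<bar>yb\<bar> + \<bar>u\<bar> \<le> 1" using y by simp
      have "yb*u = \<bar>yb\<bar>*\<bar>u\<bar>" using pos by (simp add: abs_mult[symmetric])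
      also have "\<dots> \<le> (1 - \<bar>u\<bar>)*\<bar>u\<bar>" by (rule mult_right_mono) (use s in auto)
      finally have yu: "yb*u \<le> \<bar>u\<bar> - u^2" by (simp add: algebra_simps power2_eq_square)
      have t1: "12*m*a*(yb*u) \<le> 12*m*a*(\<bar>u\<bar> - u^2)"
        by (rule mult_left_mono[OF yu]) (use m a0 in simp)
      have q: "0 \<le> 13*a^2 - 2*(6*m)*a*\<bar>u\<bar> + (4*m^2+6*m*a)*\<bar>u\<bar>^2"
      proof (rule quad_nonneg)
        show "(6*m)^2 \<le> 13*(4*m^2+6*m*a)" using m a0 by (simp add: power2_eq_square algebra_simps)
      qed simp
      have q2: "13*a^2 - 2*(6*m)*a*\<bar>u\<bar> + (4*m^2+6*m*a)*\<bar>u\<bar>^2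
          = 13*a^2 + (4*m^2 - 6*m*a)*u^2 - 12*m*a*(\<bar>u\<bar> - u^2)"
        by (simp add: algebra_simps power2_eq_square)
      show ?thesis using q q2 t1 by linarith
    qed
    have "6*m*w - 2*m^2 = 4*m^2 - 6*m*a" unfolding a_def by (simp add: algebra_simps power2_eq_square)
    then have key2: "2*G = 15*(2*m*e) + (4*m^2 - 6*m*a)*u^2 - 12*m*a*(yb*u) - 2*a^2"
      using key by simp
    have "0 \<le> 2*G" using key2 rest h1 by linarith
    then show ?thesis by simp
  qed
  show ?thesis using goal unfolding G_def u_def by (simp add: algebra_simps)
qed

lemma sos_pos:
  fixes v1 v2 U1 U2 :: real
  shows "0 \<le> 2*(v1^2+v1*v2+v2^2) + 2*(U1^2+U1*U2+U2^2) + 3*(v1*U2 - v2*U1)"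
proof -
  have "2*(v1^2+v1*v2+v2^2) + 2*(U1^2+U1*U2+U2^2) + 3*(v1*U2 - v2*U1)
      = 2*(v1 + v2/2 + 3*U2/4)^2 + (3/2)*(v2 - U1 - U2/2)^2 + (1/2)*(U1 + U2/2)^2 + (3/8)*U2^2"
    by (simp add: power2_eq_square algebra_simps)
  also have "\<dots> \<ge> 0" by (intro add_nonneg_nonneg mult_nonneg_nonneg) auto
  finally show ?thesis .
qed

lemma sos_abs:
  fixes v1 v2 U1 U2 :: real
  shows "\<bar>3*(v2*U1 - v1*U2)\<bar> \<le> v1^2 + v2^2 + (v1+v2)^2 + U1^2 + U2^2 + (U1+U2)^2"
proof -
  have p: "0 \<le> 2*(v1^2+v1*v2+v2^2) + 2*(U1^2+U1*U2+U2^2) + 3*(v1*U2 - v2*U1)" by (rule sos_pos)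
  have n: "0 \<le> 2*(v1^2+v1*v2+v2^2) + 2*((-U1)^2+(-U1)*(-U2)+(-U2)^2) + 3*(v1*(-U2) - v2*(-U1))" by (rule sos_pos)
  have e: "v1^2 + v2^2 + (v1+v2)^2 + U1^2 + U2^2 + (U1+U2)^2 = 2*(v1^2+v1*v2+v2^2) + 2*(U1^2+U1*U2+U2^2)"
    by (simp add: power2_eq_square algebra_simps)
  show ?thesis using p n unfolding e by (simp add: abs_le_iff algebra_simps)
qed

definition hh :: "real \<Rightarrow> real \<Rightarrow> real" where
  "hh w y = 5 * xlogx w + w * y^2"

lemma scalar:
  fixes wa wb wc ya yb yc :: real
  assumes w: "0 \<le> wa" "0 \<le> wb" "0 \<le> wc"
    and y: "\<bar>ya\<bar> \<le> 1" "\<bar>yb\<bar> \<le> 1" "\<bar>yc\<bar> \<le> 1"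
  shows "\<bar>(ya-yb)*(wb-wc) - (yb-yc)*(wa-wb)\<bar>
     \<le> 3*(hh wa ya + hh wb yb + hh wc yc - 3*hh ((wa+wb+wc)/3) ((ya+yb+yc)/3))"
proof -
  define m where "m = (wa+wb+wc)/3"
  define y0 where "y0 = (ya+yb+yc)/3"
  show ?thesis
  proof (cases "m = 0")
    case True
    then have "wa = 0" "wb = 0" "wc = 0" using w unfolding m_def by auto
    then show ?thesis by (simp add: hh_def xlogx_def)
  next
    case False
    then have m0: "0 < m" using w unfolding m_def by auto
    have y0b: "\<bar>y0\<bar> \<le> 1" using y unfolding y0_def by (simp add: abs_le_iff)
    have ent: "xlogx wa + xlogx wb + xlogx wc - 3 * xlogx m = bent m wa + bent m wb + bent m wc"
    proof -
      have s3: "wa+wb+wc-3*m = 0" unfolding m_def by simp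
      have "(1+ln m)*(wa-m) + (1+ln m)*(wb-m) + (1+ln m)*(wc-m) = (1+ln m)*(wa+wb+wc-3*m)"
        by (simp add: algebra_simps)
      then have "(1+ln m)*(wa-m) + (1+ln m)*(wb-m) + (1+ln m)*(wc-m) = 0" using s3 by simp
      then show ?thesis unfolding bent_def by linarith
    qed
    have quad: "wa*ya^2 + wb*yb^2 + wc*yc^2 - 3*(m*y0^2) =
       (wa*(ya-y0)^2 + 2*y0*(wa-m)*(ya-y0)) + (wb*(yb-y0)^2 + 2*y0*(wb-m)*(yb-y0))
       + (wc*(yc-y0)^2 + 2*y0*(wc-m)*(yc-y0))"
      unfolding m_def y0_def by (simp add: power2_eq_square field_simps)
    have L: "3*(hh wa ya + hh wb yb + hh wc yc - 3*hh ((wa+wb+wc)/3) ((ya+yb+yc)/3))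
      = 3*((5*bent m wa + wa*(ya-y0)^2 + 2*y0*(wa-m)*(ya-y0)) + (5*bent m wb + wb*(yb-y0)^2 + 2*y0*(wb-m)*(yb-y0))
          + (5*bent m wc + wc*(yc-y0)^2 + 2*y0*(wc-m)*(yc-y0)))"
    proof -
      have "hh ((wa+wb+wc)/3) ((ya+yb+yc)/3) = 5*xlogx m + m*y0^2" unfolding hh_def m_def y0_def by simp
      then show ?thesis using ent quad unfolding hh_def by (simp add: algebra_simps)
    qed
    have pb: "(w-m)^2 + m^2*(yy-y0)^2 \<le> 3*m*(5*bent m w + w*(yy-y0)^2 + 2*y0*(w-m)*(yy-y0))"
      if "0 \<le> w" "w \<le> 3*m" "\<bar>yy\<bar> \<le> 1" for w yy
    proof (rule pt_bound[OF m0 that y0b])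
      show "w \<le> m \<Longrightarrow> (w-m)^2 \<le> 2*m*bent m w" using bent_low[OF m0 that(1)] by simp
      show "m \<le> w \<Longrightarrow> (w-m)^2 \<le> (w+m)*bent m w" using bent_high[OF m0] by simp
      show "0 \<le> bent m w"
      proof (cases "w \<le> m")
        case True
        have "0 \<le> (w-m)^2" by simp
        then have "0 \<le> 2*m*bent m w" using bent_low[OF m0 that(1) True] by linarith
        then show ?thesis using m0 by (simp add: zero_le_mult_iff)
      next
        case False
        have "0 \<le> (w-m)^2" by simp
        then have "0 \<le> (w+m)*bent m w" using bent_high[OF m0] False by (meson le_cases order_trans)
        then show ?thesis using m0 False by (simp add: zero_le_mult_iff)
      qed
    qed
    have ba: "(wa-m)^2 + m^2*(ya-y0)^2 \<le> 3*m*(5*bent m wa + wa*(ya-y0)^2 + 2*y0*(wa-m)*(ya-y0))"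
      by (rule pb) (use w y in \<open>auto simp: m_def\<close>)
    have bb: "(wb-m)^2 + m^2*(yb-y0)^2 \<le> 3*m*(5*bent m wb + wb*(yb-y0)^2 + 2*y0*(wb-m)*(yb-y0))"
      by (rule pb) (use w y in \<open>auto simp: m_def\<close>)
    have bc: "(wc-m)^2 + m^2*(yc-y0)^2 \<le> 3*m*(5*bent m wc + wc*(yc-y0)^2 + 2*y0*(wc-m)*(yc-y0))"
      by (rule pb) (use w y in \<open>auto simp: m_def\<close>)
    have S: "\<bar>3*((wb-m)*(m*(ya-y0)) - (wa-m)*(m*(yb-y0)))\<bar> \<le>
      (wa-m)^2 + (wb-m)^2 + ((wa-m)+(wb-m))^2 + (m*(ya-y0))^2 + (m*(yb-y0))^2 + ((m*(ya-y0))+(m*(yb-y0)))^2"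
      by (rule sos_abs)
    have "(wa-m)+(wb-m) = -(wc-m)" unfolding m_def by (simp add: field_simps)
    then have e1: "((wa-m)+(wb-m))^2 = (wc-m)^2" by (simp only: power2_minus)
    have "(m*(ya-y0))+(m*(yb-y0)) = -(m*(yc-y0))" unfolding y0_def by (simp add: field_simps)
    then have e2: "((m*(ya-y0))+(m*(yb-y0)))^2 = m^2*(yc-y0)^2" by (simp add: power_mult_distrib)
    have e3: "3*((wb-m)*(m*(ya-y0)) - (wa-m)*(m*(yb-y0))) = m*((ya-yb)*(wb-wc) - (yb-yc)*(wa-wb))"
      unfolding m_def y0_def by (simp add: field_simps)
    have "m * \<bar>(ya-yb)*(wb-wc) - (yb-yc)*(wa-wb)\<bar> \<le>
       m * (3*((5*bent m wa + wa*(ya-y0)^2 + 2*y0*(wa-m)*(ya-y0)) + (5*bent m wb + wb*(yb-y0)^2 + 2*y0*(wb-m)*(yb-y0))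
          + (5*bent m wc + wc*(yc-y0)^2 + 2*y0*(wc-m)*(yc-y0))))"
    proof -
      define Aa where "Aa = 5*bent m wa + wa*(ya-y0)^2 + 2*y0*(wa-m)*(ya-y0)"
      define Ab where "Ab = 5*bent m wb + wb*(yb-y0)^2 + 2*y0*(wb-m)*(yb-y0)"
      define Ac where "Ac = 5*bent m wc + wc*(yc-y0)^2 + 2*y0*(wc-m)*(yc-y0)"
      have S2: "m * \<bar>(ya-yb)*(wb-wc) - (yb-yc)*(wa-wb)\<bar> \<le>
        (wa-m)^2 + (wb-m)^2 + (wc-m)^2 + m^2*(ya-y0)^2 + m^2*(yb-y0)^2 + m^2*(yc-y0)^2"
        using S unfolding e1 e2 e3 using m0 by (simp add: abs_mult power_mult_distrib)
      have d: "m * (3*(Aa + Ab + Ac)) = 3*m*Aa + 3*m*Ab + 3*m*Ac" by (simp add: algebra_simps)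
      show ?thesis using S2 d ba bb bc unfolding Aa_def[symmetric] Ab_def[symmetric] Ac_def[symmetric]
        by linarith
    qed
    then show ?thesis unfolding L using m0 by simp
  qed
qed

lemma incA_sum:
  assumes "e < n^2" shows "(\<Sum>r<2*n. incA n r e) = 2"
proof -
  have n0: "0 < n" using assms by (cases n) auto
  have ed: "e div n < n" using assms by (simp add: power2_eq_square less_mult_imp_div_less)
  have em: "e mod n < n" using n0 by simp
  have "\<And>r. incA n r e = (if r = e div n then 1 else 0) + (if r = n + e mod n then 1 else 0)"
    using ed em by (auto simp: incA_def)
  then have "(\<Sum>r<2*n. incA n r e) = (\<Sum>r<2*n. (if r = e div n then 1 else 0) + (if r = n + e mod n then (1::real) else 0))"
    by simp
  also have "\<dots> = 2" using ed em by (simp add: sum.distrib)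
  finally show ?thesis .
qed

lemma Eblk_sum:
  assumes "j < n" shows "(\<Sum>r<2*n. Eblk n r j) = -1"
proof -
  have "\<And>r. Eblk n r j = (if r = j then -1 else 0)" using assms by (auto simp: Eblk_def)
  then show ?thesis using assms by simp
qed

definition Rsum :: "nat \<Rightarrow> nat \<Rightarrow> pt \<Rightarrow> real" where
  "Rsum n m z = (case z of (x, p, y) \<Rightarrow>
     (\<Sum>i<m. \<Sum>e<n^2. \<Sum>r<2*n. incA n r e * hh (x i e) (y i r)) +
     (\<Sum>i<m. \<Sum>j<n. \<Sum>r<2*n. (- Eblk n r j) * hh (p j) (y i r)))"

lemma reg_eq: "reg n m d z = 2 * dinf n d / real m * Rsum n m z"
proof -
  obtain x p y where z: "z = (x, p, y)" by (cases z) auto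
  have s1: "(\<Sum>i<m. \<Sum>e<n^2. \<Sum>r<2*n. incA n r e * hh (x i e) (y i r)) =
     10 * (\<Sum>i<m. \<Sum>e<n^2. xlogx (x i e)) + (\<Sum>i<m. \<Sum>e<n^2. x i e * (\<Sum>r<2*n. incA n r e * (y i r)^2))"
  proof -
    have "\<And>i e. e < n^2 \<Longrightarrow> (\<Sum>r<2*n. incA n r e * hh (x i e) (y i r)) =
       10 * xlogx (x i e) + x i e * (\<Sum>r<2*n. incA n r e * (y i r)^2)"
    proof -
      fix i e assume "e < n^2"
      have "(\<Sum>r<2*n. incA n r e * hh (x i e) (y i r)) =
          5 * xlogx (x i e) * (\<Sum>r<2*n. incA n r e) + x i e * (\<Sum>r<2*n. incA n r e * (y i r)^2)"
        by (simp add: hh_def sum_distrib_left sum_distrib_right sum.distrib algebra_simps)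
      then show "?thesis i e" using incA_sum[OF \<open>e < n^2\<close>] by simp
    qed
    then show ?thesis by (simp add: sum.distrib sum_distrib_left)
  qed
  have s2: "(\<Sum>i<m. \<Sum>j<n. \<Sum>r<2*n. (- Eblk n r j) * hh (p j) (y i r)) =
     5 * real m * (\<Sum>j<n. xlogx (p j)) - (\<Sum>j<n. p j * (\<Sum>i<m. \<Sum>r<2*n. Eblk n r j * (y i r)^2))"
  proof -
    have "\<And>i j. j < n \<Longrightarrow> (\<Sum>r<2*n. (- Eblk n r j) * hh (p j) (y i r)) =
       5 * xlogx (p j) - p j * (\<Sum>r<2*n. Eblk n r j * (y i r)^2)"
    proof -
      fix i j assume "j < n"
      have "(\<Sum>r<2*n. (- Eblk n r j) * hh (p j) (y i r)) =
          (-(5 * xlogx (p j))) * (\<Sum>r<2*n. Eblk n r j) + (- p j) * (\<Sum>r<2*n. Eblk n r j * (y i r)^2)"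
      proof -
        have "(\<Sum>r<2*n. (- Eblk n r j) * hh (p j) (y i r)) =
           (\<Sum>r<2*n. (-(5 * xlogx (p j))) * Eblk n r j + (- p j) * (Eblk n r j * (y i r)^2))"
          by (rule sum.cong) (simp_all add: hh_def algebra_simps)
        also have "\<dots> = (-(5 * xlogx (p j))) * (\<Sum>r<2*n. Eblk n r j) + (- p j) * (\<Sum>r<2*n. Eblk n r j * (y i r)^2)"
          by (simp only: sum.distrib sum_distrib_left)
        finally show ?thesis .
      qed
      then show "?thesis i j" using Eblk_sum[OF \<open>j < n\<close>] by simp
    qed
    then have "(\<Sum>i<m. \<Sum>j<n. \<Sum>r<2*n. (- Eblk n r j) * hh (p j) (y i r)) =
       (\<Sum>i<m. \<Sum>j<n. 5 * xlogx (p j) - p j * (\<Sum>r<2*n. Eblk n r j * (y i r)^2))" by simp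
    also have "\<dots> = (\<Sum>j<n. \<Sum>i<m. 5 * xlogx (p j) - p j * (\<Sum>r<2*n. Eblk n r j * (y i r)^2))"
      by (rule sum.swap)
    also have "\<dots> = 5 * real m * (\<Sum>j<n. xlogx (p j)) - (\<Sum>j<n. p j * (\<Sum>i<m. \<Sum>r<2*n. Eblk n r j * (y i r)^2))"
      by (simp add: sum_subtractf sum_distrib_left sum.distrib algebra_simps)
    finally show ?thesis .
  qed
  show ?thesis unfolding z reg_def Rsum_def prod.case s1 s2 by (simp add: algebra_simps)
qed

lemma lin_help1:
  fixes c u v :: "'a \<Rightarrow> real"
  shows "(\<Sum>r\<in>A. c r * ((u r - v r) * k)) = ((\<Sum>r\<in>A. c r * u r) - (\<Sum>r\<in>A. c r * v r)) * k"
proof -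
  have "((\<Sum>r\<in>A. c r * u r) - (\<Sum>r\<in>A. c r * v r)) * k = (\<Sum>r\<in>A. (c r * u r - c r * v r) * k)"
    by (simp add: left_diff_distrib sum_subtractf sum_distrib_right)
  also have "\<dots> = (\<Sum>r\<in>A. c r * ((u r - v r) * k))" by (rule sum.cong) (auto simp: algebra_simps)
  finally show ?thesis by simp
qed

lemma lin_help2:
  fixes f g :: "'a \<Rightarrow> real"
  shows "(\<Sum>i\<in>A. (f i - g i) * k) = (sum f A - sum g A) * k"
  by (simp add: left_diff_distrib sum_subtractf sum_distrib_right)

definition Bf :: "real \<Rightarrow> real \<Rightarrow> real \<Rightarrow> real \<Rightarrow> real \<Rightarrow> real \<Rightarrow> real" where
  "Bf wa wb wc ya yb yc = (ya-yb)*(wb-wc) - (yb-yc)*(wa-wb)"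

definition Bsum :: "nat \<Rightarrow> nat \<Rightarrow> pt \<Rightarrow> pt \<Rightarrow> pt \<Rightarrow> real" where
  "Bsum n m a b c = (case a of (xa, pa, ya) \<Rightarrow> case b of (xb, pb, yb) \<Rightarrow> case c of (xc, pc, yc) \<Rightarrow>
     (\<Sum>i<m. \<Sum>e<n^2. \<Sum>r<2*n. incA n r e * Bf (xa i e) (xb i e) (xc i e) (ya i r) (yb i r) (yc i r)) +
     (\<Sum>i<m. \<Sum>j<n. \<Sum>r<2*n. Eblk n r j * Bf (pa j) (pb j) (pc j) (ya i r) (yb i r) (yc i r)))"

lemma ip_eq: "ip n m (pt_diff (Gop n m d q a) (Gop n m d q b)) (pt_diff b c) = 2 * dinf n d / real m * Bsum n m a b c"
proof -
  obtain xa pa ya where za: "a = (xa, pa, ya)" by (cases a) auto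
  obtain xb pb yb where zb: "b = (xb, pb, yb)" by (cases b) auto
  obtain xc pc yc where zc: "c = (xc, pc, yc)" by (cases c) auto
  define K where "K = 2 * dinf n d / real m"
  define D where "D = dinf n d"
  have X: "(\<Sum>i<m. \<Sum>e<n^2. ((d e + 2*D*ATy_x n ya i e)/real m - (d e + 2*D*ATy_x n yb i e)/real m) * (xb i e - xc i e))
     = K * (\<Sum>i<m. \<Sum>e<n^2. \<Sum>r<2*n. incA n r e * ((ya i r - yb i r) * (xb i e - xc i e)))"
  proof -
    have pw: "((d e + 2*D*ATy_x n ya i e)/real m - (d e + 2*D*ATy_x n yb i e)/real m) * (xb i e - xc i e)
       = K * (\<Sum>r<2*n. incA n r e * ((ya i r - yb i r) * (xb i e - xc i e)))" for i e
    proof -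
      have h: "(\<Sum>r<2*n. incA n r e * ((ya i r - yb i r) * (xb i e - xc i e))) = (ATy_x n ya i e - ATy_x n yb i e) * (xb i e - xc i e)"
        unfolding ATy_x_def by (rule lin_help1)
      show ?thesis unfolding h K_def D_def by (cases "m = 0") (simp_all add: field_simps)
    qed
    show ?thesis by (simp add: pw sum_distrib_left)
  qed
  have P: "(\<Sum>j<n. ((0 + 2*D*ATy_p n m ya j)/real m - (0 + 2*D*ATy_p n m yb j)/real m) * (pb j - pc j))
     = K * (\<Sum>i<m. \<Sum>j<n. \<Sum>r<2*n. Eblk n r j * ((ya i r - yb i r) * (pb j - pc j)))"
  proof -
    have pw: "((0 + 2*D*ATy_p n m ya j)/real m - (0 + 2*D*ATy_p n m yb j)/real m) * (pb j - pc j)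
       = K * (\<Sum>i<m. \<Sum>r<2*n. Eblk n r j * ((ya i r - yb i r) * (pb j - pc j)))" for j
    proof -
      have h: "(\<Sum>i<m. \<Sum>r<2*n. Eblk n r j * ((ya i r - yb i r) * (pb j - pc j))) = (ATy_p n m ya j - ATy_p n m yb j) * (pb j - pc j)"
        unfolding ATy_p_def by (simp only: lin_help1 lin_help2)
      show ?thesis unfolding h K_def D_def by (cases "m = 0") (simp_all add: field_simps)
    qed
    have "(\<Sum>j<n. ((0 + 2*D*ATy_p n m ya j)/real m - (0 + 2*D*ATy_p n m yb j)/real m) * (pb j - pc j))
        = K * (\<Sum>j<n. \<Sum>i<m. \<Sum>r<2*n. Eblk n r j * ((ya i r - yb i r) * (pb j - pc j)))"
      by (simp only: pw sum_distrib_left)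
    also have "(\<Sum>j<n. \<Sum>i<m. \<Sum>r<2*n. Eblk n r j * ((ya i r - yb i r) * (pb j - pc j)))
       = (\<Sum>i<m. \<Sum>j<n. \<Sum>r<2*n. Eblk n r j * ((ya i r - yb i r) * (pb j - pc j)))"
      by (rule sum.swap)
    finally show ?thesis .
  qed
  have Y: "(\<Sum>i<m. \<Sum>r<2*n. (2*D*(cvec n q i r - Ax n m a i r)/real m - 2*D*(cvec n q i r - Ax n m b i r)/real m) * (yb i r - yc i r))
     = - K * ((\<Sum>i<m. \<Sum>e<n^2. \<Sum>r<2*n. incA n r e * ((xa i e - xb i e) * (yb i r - yc i r)))
            + (\<Sum>i<m. \<Sum>j<n. \<Sum>r<2*n. Eblk n r j * ((pa j - pb j) * (yb i r - yc i r))))"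
  proof -
    have pw: "(2*D*(cvec n q i r - Ax n m a i r)/real m - 2*D*(cvec n q i r - Ax n m b i r)/real m) * (yb i r - yc i r)
       = - K * ((\<Sum>e<n^2. incA n r e * ((xa i e - xb i e) * (yb i r - yc i r)))
            + (\<Sum>j<n. Eblk n r j * ((pa j - pb j) * (yb i r - yc i r))))" for i r
    proof -
      have h: "(\<Sum>e<n^2. incA n r e * ((xa i e - xb i e) * (yb i r - yc i r)))
            + (\<Sum>j<n. Eblk n r j * ((pa j - pb j) * (yb i r - yc i r))) = (Ax n m a i r - Ax n m b i r) * (yb i r - yc i r)"
        unfolding Ax_def za zb prod.case lin_help1 by (simp add: algebra_simps)
      show ?thesis unfolding h K_def D_def by (cases "m = 0") (simp_all add: field_simps)
    qed
    have "(\<Sum>i<m. \<Sum>r<2*n. (2*D*(cvec n q i r - Ax n m a i r)/real m - 2*D*(cvec n q i r - Ax n m b i r)/real m) * (yb i r - yc i r))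
      = - K * ((\<Sum>i<m. \<Sum>r<2*n. \<Sum>e<n^2. incA n r e * ((xa i e - xb i e) * (yb i r - yc i r)))
            + (\<Sum>i<m. \<Sum>r<2*n. \<Sum>j<n. Eblk n r j * ((pa j - pb j) * (yb i r - yc i r))))"
      by (simp only: pw mult_minus_left sum_negf distrib_left sum_distrib_left sum.distrib)
    also have "(\<Sum>i<m. \<Sum>r<2*n. \<Sum>e<n^2. incA n r e * ((xa i e - xb i e) * (yb i r - yc i r)))
       = (\<Sum>i<m. \<Sum>e<n^2. \<Sum>r<2*n. incA n r e * ((xa i e - xb i e) * (yb i r - yc i r)))"
      by (rule sum.cong[OF refl], rule sum.swap)
    also have "(\<Sum>i<m. \<Sum>r<2*n. \<Sum>j<n. Eblk n r j * ((pa j - pb j) * (yb i r - yc i r)))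
       = (\<Sum>i<m. \<Sum>j<n. \<Sum>r<2*n. Eblk n r j * ((pa j - pb j) * (yb i r - yc i r)))"
      by (rule sum.cong[OF refl], rule sum.swap)
    finally show ?thesis .
  qed
  have B: "Bsum n m a b c = (\<Sum>i<m. \<Sum>e<n^2. \<Sum>r<2*n. incA n r e * ((ya i r - yb i r) * (xb i e - xc i e)))
      - (\<Sum>i<m. \<Sum>e<n^2. \<Sum>r<2*n. incA n r e * ((xa i e - xb i e) * (yb i r - yc i r)))
      + (\<Sum>i<m. \<Sum>j<n. \<Sum>r<2*n. Eblk n r j * ((ya i r - yb i r) * (pb j - pc j)))
      - (\<Sum>i<m. \<Sum>j<n. \<Sum>r<2*n. Eblk n r j * ((pa j - pb j) * (yb i r - yc i r)))"
  proof -
    have B1: "(\<Sum>i<m. \<Sum>e<n^2. \<Sum>r<2*n. incA n r e * Bf (xa i e) (xb i e) (xc i e) (ya i r) (yb i r) (yc i r))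
      = (\<Sum>i<m. \<Sum>e<n^2. \<Sum>r<2*n. incA n r e * ((ya i r - yb i r) * (xb i e - xc i e)) - incA n r e * ((xa i e - xb i e) * (yb i r - yc i r)))"
      by (intro sum.cong refl) (simp add: Bf_def algebra_simps)
    have B2: "(\<Sum>i<m. \<Sum>j<n. \<Sum>r<2*n. Eblk n r j * Bf (pa j) (pb j) (pc j) (ya i r) (yb i r) (yc i r))
      = (\<Sum>i<m. \<Sum>j<n. \<Sum>r<2*n. Eblk n r j * ((ya i r - yb i r) * (pb j - pc j)) - Eblk n r j * ((pa j - pb j) * (yb i r - yc i r)))"
      by (intro sum.cong refl) (simp add: Bf_def algebra_simps)
    show ?thesis unfolding Bsum_def za zb zc prod.case B1 B2 sum_subtractf by simp
  qed
  have "ip n m (pt_diff (Gop n m d q a) (Gop n m d q b)) (pt_diff b c)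
    = (\<Sum>i<m. \<Sum>e<n^2. ((d e + 2*D*ATy_x n ya i e)/real m - (d e + 2*D*ATy_x n yb i e)/real m) * (xb i e - xc i e))
    + (\<Sum>j<n. ((0 + 2*D*ATy_p n m ya j)/real m - (0 + 2*D*ATy_p n m yb j)/real m) * (pb j - pc j))
    + (\<Sum>i<m. \<Sum>r<2*n. (2*D*(cvec n q i r - Ax n m a i r)/real m - 2*D*(cvec n q i r - Ax n m b i r)/real m) * (yb i r - yc i r))"
    unfolding ip_def pt_diff_def Gop_def D_def using za zb zc by simp
  also have "\<dots> = K * Bsum n m a b c" unfolding X P Y B by (simp add: algebra_simps)
  finally show ?thesis unfolding K_def .
qed

definition gg :: "real \<Rightarrow> real \<Rightarrow> real \<Rightarrow> real \<Rightarrow> real \<Rightarrow> real \<Rightarrow> real" where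
  "gg wa wb wc ya yb yc = 3*(hh wa ya + hh wb yb + hh wc yc - 3*hh ((wa+wb+wc)/3) ((ya+yb+yc)/3))"

lemma comb3:
  fixes fa fb fc fd :: "'a \<Rightarrow> real"
  shows "(\<Sum>x\<in>S. 3*(fa x + fb x + fc x - 3*fd x)) = 3*(sum fa S + sum fb S + sum fc S - 3*sum fd S)"
  by (simp add: sum.distrib sum_subtractf sum_distrib_left)

lemma Rsum_comb:
  "3*(Rsum n m a + Rsum n m b + Rsum n m c - 3*Rsum n m (pt_avg3 a b c)) =
   (case a of (xa, pa, ya) \<Rightarrow> case b of (xb, pb, yb) \<Rightarrow> case c of (xc, pc, yc) \<Rightarrow>
     (\<Sum>i<m. \<Sum>e<n^2. \<Sum>r<2*n. incA n r e * gg (xa i e) (xb i e) (xc i e) (ya i r) (yb i r) (yc i r)) +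
     (\<Sum>i<m. \<Sum>j<n. \<Sum>r<2*n. (- Eblk n r j) * gg (pa j) (pb j) (pc j) (ya i r) (yb i r) (yc i r)))"
proof -
  obtain xa pa ya where za: "a = (xa, pa, ya)" by (cases a) auto
  obtain xb pb yb where zb: "b = (xb, pb, yb)" by (cases b) auto
  obtain xc pc yc where zc: "c = (xc, pc, yc)" by (cases c) auto
  have G1: "(\<Sum>i<m. \<Sum>e<n^2. \<Sum>r<2*n. incA n r e * gg (xa i e) (xb i e) (xc i e) (ya i r) (yb i r) (yc i r))
    = (\<Sum>i<m. \<Sum>e<n^2. \<Sum>r<2*n. 3*(incA n r e * hh (xa i e) (ya i r) + incA n r e * hh (xb i e) (yb i r)
        + incA n r e * hh (xc i e) (yc i r) - 3*(incA n r e * hh ((xa i e + xb i e + xc i e)/3) ((ya i r + yb i r + yc i r)/3))))"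
    by (intro sum.cong refl) (simp add: gg_def algebra_simps)
  have G2: "(\<Sum>i<m. \<Sum>j<n. \<Sum>r<2*n. (- Eblk n r j) * gg (pa j) (pb j) (pc j) (ya i r) (yb i r) (yc i r))
    = (\<Sum>i<m. \<Sum>j<n. \<Sum>r<2*n. 3*((- Eblk n r j) * hh (pa j) (ya i r) + (- Eblk n r j) * hh (pb j) (yb i r)
        + (- Eblk n r j) * hh (pc j) (yc i r) - 3*((- Eblk n r j) * hh ((pa j + pb j + pc j)/3) ((ya i r + yb i r + yc i r)/3))))"
    by (intro sum.cong refl) (simp add: gg_def algebra_simps)
  show ?thesis unfolding za zb zc prod.case G1 G2 comb3 Rsum_def pt_avg3_def by (simp add: algebra_simps)
qed

lemma dinf_nonneg: assumes "1 \<le> n" shows "0 \<le> dinf n d"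
proof -
  have "0 \<in> {..<n^2}" using assms by simp
  then have "\<bar>d 0\<bar> \<le> Max ((\<lambda>e. \<bar>d e\<bar>) ` {..<n^2})" by (intro Max_ge) auto
  then show ?thesis unfolding dinf_def by linarith
qed

lemma gg_bound:
  assumes "0 \<le> wa" "0 \<le> wb" "0 \<le> wc" "\<bar>ya\<bar> \<le> 1" "\<bar>yb\<bar> \<le> 1" "\<bar>yc\<bar> \<le> 1"
  shows "\<bar>Bf wa wb wc ya yb yc\<bar> \<le> gg wa wb wc ya yb yc"
  using scalar[OF assms] unfolding Bf_def gg_def .

lemma coef_pos: "0 \<le> (c::real) \<Longrightarrow> \<bar>B\<bar> \<le> g \<Longrightarrow> c * B \<le> c * g"
  by (meson abs_ge_self mult_left_mono order_trans)

lemma coef_neg: "(c::real) \<le> 0 \<Longrightarrow> \<bar>B\<bar> \<le> g \<Longrightarrow> c * B \<le> (- c) * g"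
proof -
  assume c: "c \<le> 0" and b: "\<bar>B\<bar> \<le> g"
  have "c * B = (-c) * (-B)" by simp
  also have "\<dots> \<le> (-c) * g" using c b by (intro mult_left_mono) auto
  finally show ?thesis .
qed

theorem theorem2:
  fixes n m :: nat and d :: "nat \<Rightarrow> real" and q :: "nat \<Rightarrow> nat \<Rightarrow> real"
    and a b c :: pt
  assumes "1 \<le> n" and "1 \<le> m"
    and "\<forall>i<m. simplex n (q i)"
    and "\<forall>e<n^2. 0 \<le> d e"
    and "inZ n m a" and "inZ n m b" and "inZ n m c"
  shows "3 * (reg n m d a + reg n m d b + reg n m d c - 3 * reg n m d (pt_avg3 a b c))
           \<ge> ip n m (pt_diff (Gop n m d q a) (Gop n m d q b)) (pt_diff b c)"
proof -
  obtain xa pa ya where za: "a = (xa, pa, ya)" by (cases a) auto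
  obtain xb pb yb where zb: "b = (xb, pb, yb)" by (cases b) auto
  obtain xc pc yc where zc: "c = (xc, pc, yc)" by (cases c) auto
  define K where "K = 2 * dinf n d / real m"
  have K0: "0 \<le> K" unfolding K_def using dinf_nonneg[OF assms(1)] by simp
  have ia: "\<forall>i<m. simplex (n^2) (xa i)" "simplex n pa" "\<forall>i<m. \<forall>r<2*n. -1 \<le> ya i r \<and> ya i r \<le> 1"
    using assms(5) unfolding za inZ_def by auto
  have ib: "\<forall>i<m. simplex (n^2) (xb i)" "simplex n pb" "\<forall>i<m. \<forall>r<2*n. -1 \<le> yb i r \<and> yb i r \<le> 1"
    using assms(6) unfolding zb inZ_def by auto
  have ic: "\<forall>i<m. simplex (n^2) (xc i)" "simplex n pc" "\<forall>i<m. \<forall>r<2*n. -1 \<le> yc i r \<and> yc i r \<le> 1"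
    using assms(7) unfolding zc inZ_def by auto
  have xpos: "0 \<le> xa i e" "0 \<le> xb i e" "0 \<le> xc i e" if "i < m" "e < n^2" for i e
    using ia(1) ib(1) ic(1) that unfolding simplex_def by auto
  have ppos: "0 \<le> pa j" "0 \<le> pb j" "0 \<le> pc j" if "j < n" for j
    using ia(2) ib(2) ic(2) that unfolding simplex_def by auto
  have ybd: "\<bar>ya i r\<bar> \<le> 1" "\<bar>yb i r\<bar> \<le> 1" "\<bar>yc i r\<bar> \<le> 1" if "i < m" "r < 2*n" for i r
    using ia(3) ib(3) ic(3) that by (auto simp: abs_le_iff)
  have incA0: "0 \<le> incA n r e" for r e by (simp add: incA_def)
  have Eblk0: "Eblk n r j \<le> 0" for r j by (simp add: Eblk_def)
  have S1: "(\<Sum>i<m. \<Sum>e<n^2. \<Sum>r<2*n. incA n r e * Bf (xa i e) (xb i e) (xc i e) (ya i r) (yb i r) (yc i r))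
     \<le> (\<Sum>i<m. \<Sum>e<n^2. \<Sum>r<2*n. incA n r e * gg (xa i e) (xb i e) (xc i e) (ya i r) (yb i r) (yc i r))"
    by (intro sum_mono coef_pos[OF incA0] gg_bound xpos ybd) auto
  have S2: "(\<Sum>i<m. \<Sum>j<n. \<Sum>r<2*n. Eblk n r j * Bf (pa j) (pb j) (pc j) (ya i r) (yb i r) (yc i r))
     \<le> (\<Sum>i<m. \<Sum>j<n. \<Sum>r<2*n. (- Eblk n r j) * gg (pa j) (pb j) (pc j) (ya i r) (yb i r) (yc i r))"
    by (intro sum_mono coef_neg[OF Eblk0] gg_bound ppos ybd) auto
  have "Bsum n m a b c \<le> 3*(Rsum n m a + Rsum n m b + Rsum n m c - 3*Rsum n m (pt_avg3 a b c))"
    unfolding Rsum_comb unfolding Bsum_def za zb zc prod.case using S1 S2 by linarith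
  then have "K * Bsum n m a b c \<le> K * (3*(Rsum n m a + Rsum n m b + Rsum n m c - 3*Rsum n m (pt_avg3 a b c)))"
    using K0 by (simp add: mult_left_mono)
  moreover have "3 * (reg n m d a + reg n m d b + reg n m d c - 3 * reg n m d (pt_avg3 a b c))
     = K * (3*(Rsum n m a + Rsum n m b + Rsum n m c - 3*Rsum n m (pt_avg3 a b c)))"
    unfolding reg_eq K_def by (simp add: algebra_simps)
  ultimately show ?thesis unfolding ip_eq K_def[symmetric] by simp
qed

end
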